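(* Let $a>0$, $\rho>0$ and let $(k_j)_{j\ge 1}$ be a sequence of positive reals. Let $X_1,X_2,\dots$ be random variables such that each $X_j$ has the $\mathrm{GWD}(a,k_j;\rho)$ distribution and, for each $n\ge 1$, the vector $(X_1,\dots,X_n)$ has the $\mathrm{MGWD}(a;k_1,\dots,k_n;\rho)$ distribution. Put $S=\sum_{j=1}^\infty X_j$. If $m=\sum_{j=1}^\infty k_j<\infty$, then $S<\infty$ with probability $1$ and $S$ has the $\mathrm{GWD}(a,m;\rho)$ distribution. If $\sum_{j=1}^\infty k_j=\infty$, then $S=\infty$ with probability $1$.
   Context: For $x>0$ and $\beta\ge 0$ write $x_{(\beta)}=\Gamma(x+\beta)/\Gamma(x)$. For $a,k,\rho>0$ the generalized Waring distribution $\mathrm{GWD}(a,k;\rho)$ is the probability law on $\{0,1,2,\dots\}$ given by $P(X=n)=\frac{\rho_{(k)}}{(\rho+a)_{(k)}}\,\frac{a_{(n)}\,k_{(n)}}{(\rho+a+k)_{(n)}}\,\frac{1}{n!}$, $n=0,1,2,\dots$. For $a,\rho>0$ and $k_1,\dots,k_s>0$, the multivariate generalized Waring distribution $\mathrm{MGWD}(a;k_1,\dots,k_s;\rho)$ is the law of a random vector $(X_1,\dots,X_s)$ on $\{0,1,2,\dots\}^s$ with $P(X_i=x_i,\ i=1,\dots,s)=\frac{\rho_{(\sum_i k_i)}\,a_{(\sum_i x_i)}}{(\rho+a)_{(\sum_i k_i+\sum_i x_i)}}\prod_{i=1}^s\frac{(k_i)_{(x_i)}}{x_i!}$. *)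

theory Defs
  imports "HOL-Probability.Probability"
begin

definition rfac :: "real \<Rightarrow> real \<Rightarrow> real" where
  "rfac x b = Gamma (x + b) / Gamma x"

definition GWD :: "real \<Rightarrow> real \<Rightarrow> real \<Rightarrow> nat \<Rightarrow> real" where
  "GWD a k \<rho> n = rfac \<rho> k / rfac (\<rho> + a) k
      * (rfac a (real n) * rfac k (real n) / rfac (\<rho> + a + k) (real n)) / fact n"

text \<open>Joint mass function of MGWD(a; k_0,...,k_{s-1}; rho) at (x_0,...,x_{s-1}).\<close>
definition MGWD :: "real \<Rightarrow> (nat \<Rightarrow> real) \<Rightarrow> real \<Rightarrow> nat \<Rightarrow> (nat \<Rightarrow> nat) \<Rightarrow> real" where
  "MGWD a k \<rho> s x =
     rfac \<rho> (\<Sum>i<s. k i) * rfac a (real (\<Sum>i<s. x i))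
       / rfac (\<rho> + a) ((\<Sum>i<s. k i) + real (\<Sum>i<s. x i))
     * (\<Prod>i<s. rfac (k i) (real (x i)) / fact (x i))"

end

theory Submission
  imports Defs "HOL-Computational_Algebra.Formal_Power_Series"
begin

lemma poch_gchoose: "pochhammer (x::real) m / fact m = (-1)^m * ((-x) gchoose m)"
  by (simp add: gbinomial_pochhammer)

lemma poch_vdm:
  fixes A B :: real
  shows "(\<Sum>j\<le>t. pochhammer A (t-j)/fact(t-j) * (pochhammer B j / fact j)) = pochhammer (A+B) t / fact t"
proof -
  have "(\<Sum>j\<le>t. pochhammer A (t-j)/fact(t-j) * (pochhammer B j / fact j))
      = (\<Sum>j\<in>{0..t}. (-1)^t * (((-B) gchoose j) * ((-A) gchoose (t-j))))"
  proof (rule sum.cong)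
    fix j assume "j \<in> {0..t}"
    hence "(-1::real)^(t-j) * (-1)^j = (-1)^t" by (simp flip: power_add)
    thus "pochhammer A (t-j)/fact(t-j) * (pochhammer B j / fact j) = (-1)^t * (((-B) gchoose j) * ((-A) gchoose (t-j)))"
      unfolding poch_gchoose by (metis (no_types, lifting) mult.assoc mult.commute mult.left_commute)
  qed auto
  also have "\<dots> = (-1)^t * ((-B + -A) gchoose t)"
    by (simp add: gbinomial_Vandermonde flip: sum_distrib_left)
  also have "\<dots> = pochhammer (A+B) t / fact t" by (simp add: poch_gchoose add.commute)
  finally show ?thesis .
qed

definition comp :: "nat \<Rightarrow> nat \<Rightarrow> (nat \<Rightarrow> nat) set" where
  "comp n t = {x \<in> PiE {..<n} (\<lambda>_. {..t}). (\<Sum>i<n. x i) = t}"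

lemma finite_comp: "finite (comp n t)"
  unfolding comp_def by (rule finite_subset[of _ "PiE {..<n} (\<lambda>_. {..t})"]) (auto intro: finite_PiE)

lemma comp_sum:
  "(\<Sum>x\<in>comp (Suc n) t. F x) = (\<Sum>j\<le>t. \<Sum>y\<in>comp n (t-j). F (y(n:=j)))"
proof -
  have "(\<Sum>j\<le>t. \<Sum>y\<in>comp n (t-j). F (y(n:=j))) = (\<Sum>(j,y)\<in>Sigma {..t} (\<lambda>j. comp n (t-j)). F (y(n:=j)))"
    by (rule sum.Sigma) (auto simp: finite_comp)
  also have "\<dots> = (\<Sum>p\<in>Sigma {..t} (\<lambda>j. comp n (t-j)). F ((\<lambda>p. (snd p)(n := fst p)) p))"
    by (simp add: case_prod_unfold)
  also have "\<dots> = (\<Sum>x\<in>comp (Suc n) t. F x)"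
  proof (rule sum.reindex_bij_betw)
    show "bij_betw (\<lambda>p. (snd p)(n := fst p)) (Sigma {..t} (\<lambda>j. comp n (t - j))) (comp (Suc n) t)"
    proof (rule bij_betw_byWitness[where f' = "\<lambda>x. (x n, x(n:=undefined))"])
      show "\<forall>p\<in>Sigma {..t} (\<lambda>j. comp n (t - j)). (((snd p)(n := fst p)) n, ((snd p)(n := fst p))(n:=undefined)) = p"
      proof
        fix p assume "p \<in> Sigma {..t} (\<lambda>j. comp n (t - j))"
        then obtain j y where p: "p = (j,y)" "y \<in> comp n (t-j)" by auto
        hence "y n = undefined" by (auto simp: comp_def PiE_def extensional_def)
        thus "(((snd p)(n := fst p)) n, ((snd p)(n := fst p))(n:=undefined)) = p" using p by auto
      qed
      show "\<forall>x\<in>comp (Suc n) t. (snd (x n, x(n := undefined)))(n := fst (x n, x(n := undefined))) = x"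
        by auto
      show "(\<lambda>p. (snd p)(n := fst p)) ` Sigma {..t} (\<lambda>j. comp n (t - j)) \<subseteq> comp (Suc n) t"
      proof
        fix p assume "p \<in> (\<lambda>p. (snd p)(n := fst p)) ` Sigma {..t} (\<lambda>j. comp n (t - j))"
        then obtain j y where p: "p = y(n:=j)" and j: "j \<in> {..t}" and y: "y \<in> comp n (t-j)" by auto
        have s: "(\<Sum>i<n. (y(n:=j)) i) = (\<Sum>i<n. y i)" by (rule sum.cong) auto
        show "p \<in> comp (Suc n) t"
        proof -
          have y1: "\<forall>i<n. y i \<le> t - j" and y2: "\<forall>i. \<not> i < n \<longrightarrow> y i = undefined" and y3: "sum y {..<n} = t-j"
            using y by (auto simp: comp_def PiE_iff extensional_def)
          have "(\<Sum>i<Suc n. (y(n:=j)) i) = t" using s y3 j by simp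
          moreover have "y(n:=j) \<in> PiE {..<Suc n} (\<lambda>_. {..t})"
            using y1 y2 j by (auto simp: PiE_iff extensional_def less_Suc_eq)
          ultimately show ?thesis using p s by (simp add: comp_def)
        qed
      qed
      show "(\<lambda>x. (x n, x(n := undefined))) ` comp (Suc n) t \<subseteq> Sigma {..t} (\<lambda>j. comp n (t - j))"
      proof
        fix p assume "p \<in> (\<lambda>x. (x n, x(n := undefined))) ` comp (Suc n) t"
        then obtain x where p: "p = (x n, x(n := undefined))" and x: "x \<in> comp (Suc n) t" by auto
        hence st: "(\<Sum>i<n. x i) + x n = t" by (simp add: comp_def)
        have s: "(\<Sum>i<n. (x(n:=undefined)) i) = (\<Sum>i<n. x i)" by (rule sum.cong) auto
        have "x n \<in> {..t}" using st by auto
        moreover have "x(n := undefined) \<in> comp n (t - x n)"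
        proof -
          have x1: "\<forall>i<Suc n. x i \<le> t" and x2: "\<forall>i. \<not> i < Suc n \<longrightarrow> x i = undefined"
            using x by (auto simp: comp_def PiE_iff extensional_def)
          have "\<forall>i<n. x i \<le> t - x n"
          proof safe
            fix i assume "i < n"
            hence "x i \<le> (\<Sum>i<n. x i)" by (intro member_le_sum) auto
            thus "x i \<le> t - x n" using st by simp
          qed
          hence "x(n:=undefined) \<in> PiE {..<n} (\<lambda>_. {..t - x n})"
            using x2 by (auto simp: PiE_iff extensional_def less_Suc_eq)
          thus ?thesis using st s by (simp add: comp_def)
        qed
        ultimately show "p \<in> Sigma {..t} (\<lambda>j. comp n (t - j))" using p by auto
      qed
    qed
  qed
  finally show ?thesis ..
qed

lemma comp_poch:
  fixes k :: "nat \<Rightarrow> real"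
  shows "(\<Sum>x\<in>comp n t. \<Prod>i<n. pochhammer (k i) (x i) / fact (x i)) = pochhammer (\<Sum>i<n. k i) t / fact t"
proof (induction n arbitrary: t)
  case 0
  have "comp 0 t = (if t = 0 then {\<lambda>_. undefined} else {})" by (auto simp: comp_def)
  thus ?case by (cases t) (auto simp: pochhammer_0_left)
next
  case (Suc n)
  have "(\<Sum>x\<in>comp (Suc n) t. \<Prod>i<Suc n. pochhammer (k i) (x i) / fact (x i))
     = (\<Sum>j\<le>t. \<Sum>y\<in>comp n (t-j). (\<Prod>i<n. pochhammer (k i) (y i) / fact (y i)) * (pochhammer (k n) j / fact j))"
  proof -
    have "\<And>y j. (\<Prod>i<Suc n. pochhammer (k i) ((y(n:=j)) i) / fact ((y(n:=j)) i)) = (\<Prod>i<n. pochhammer (k i) (y i) / fact (y i)) * (pochhammer (k n) j / fact j)"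
      by (simp add: prod.lessThan_Suc)
    thus ?thesis by (simp add: comp_sum)
  qed
  also have "\<dots> = (\<Sum>j\<le>t. (\<Sum>y\<in>comp n (t-j). (\<Prod>i<n. pochhammer (k i) (y i) / fact (y i))) * (pochhammer (k n) j / fact j))"
    by (simp only: sum_distrib_right)
  also have "\<dots> = (\<Sum>j\<le>t. pochhammer (\<Sum>i<n. k i) (t-j)/fact(t-j) * (pochhammer (k n) j / fact j))"
    by (simp only: Suc.IH)
  also have "\<dots> = pochhammer (\<Sum>i<Suc n. k i) t / fact t" by (simp only: poch_vdm sum.lessThan_Suc)
  finally show ?case .
qed

lemma pos_nonpos: "(x::real) > 0 \<Longrightarrow> x \<notin> \<int>\<^sub>\<le>\<^sub>0"
  by auto

lemma Gamma_ne0 [simp]: "x > 0 \<Longrightarrow> (Gamma (x::real) = 0) = False"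
  by (metis Gamma_real_pos less_irrefl)

lemma rfac_nat: "(y::real) > 0 \<Longrightarrow> rfac y (real j) = pochhammer y j"
  by (simp add: rfac_def pochhammer_Gamma pos_nonpos)

lemma rfac_add:
  assumes "(c::real) > 0" "K \<ge> 0"
  shows "rfac c (K + real t) = rfac c K * pochhammer (c+K) t"
proof -
  have "Gamma (c+K) > 0" "Gamma c > 0" using assms by auto
  moreover have "pochhammer (c+K) t = Gamma (c + K + real t) / Gamma (c+K)"
    using assms by (simp add: pochhammer_Gamma pos_nonpos)
  ultimately show ?thesis by (simp add: rfac_def add.assoc)
qed

definition Cf :: "real \<Rightarrow> real \<Rightarrow> real \<Rightarrow> real" where
  "Cf a \<rho> K = rfac \<rho> K / rfac (\<rho>+a) K"

definition uf :: "real \<Rightarrow> real \<Rightarrow> real \<Rightarrow> nat \<Rightarrow> real" where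
  "uf a \<rho> K j = pochhammer a j * (pochhammer K j / pochhammer (\<rho>+a+K) j) / fact j"

lemma GWD_split:
  assumes "a > 0" "\<rho> > 0" "K > 0"
  shows "GWD a K \<rho> j = Cf a \<rho> K * uf a \<rho> K j"
  using assms by (simp add: GWD_def Cf_def uf_def rfac_nat)

lemma Cf_pos: "a > 0 \<Longrightarrow> \<rho> > 0 \<Longrightarrow> K \<ge> 0 \<Longrightarrow> Cf a \<rho> K > 0"
  by (simp add: Cf_def rfac_def)

lemma poch_ratio_mono:
  assumes "0 < K" "K \<le> L" "(c::real) > 0"
  shows "pochhammer K j / pochhammer (c+K) j \<le> pochhammer L j / pochhammer (c+L) j"
proof -
  have "pochhammer K j / pochhammer (c+K) j = (\<Prod>i<j. (K + real i) / (c + K + real i))"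
    by (simp add: pochhammer_prod prod_dividef atLeast0LessThan)
  also have "\<dots> \<le> (\<Prod>i<j. (L + real i) / (c + L + real i))"
  proof (rule prod_mono, safe)
    fix i
    show "0 \<le> (K + real i) / (c + K + real i)" using assms by auto
    have "(K + real i) * (c + L + real i) \<le> (L + real i) * (c + K + real i)"
      using assms by (simp add: algebra_simps mult_left_mono)
    thus "(K + real i) / (c + K + real i) \<le> (L + real i) / (c + L + real i)"
      using assms by (simp add: divide_simps)
  qed
  also have "\<dots> = pochhammer L j / pochhammer (c+L) j"
    by (simp add: pochhammer_prod prod_dividef atLeast0LessThan)
  finally show ?thesis .
qed

lemma poch_ratio_le1:
  assumes "0 < K" "(c::real) > 0"
  shows "pochhammer K j / pochhammer (c+K) j \<le> 1"
proof -
  have "pochhammer K j / pochhammer (c+K) j = (\<Prod>i<j. (K + real i) / (c + K + real i))"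
    by (simp add: pochhammer_prod prod_dividef atLeast0LessThan)
  also have "\<dots> \<le> (\<Prod>i<j. 1)"
    by (rule prod_mono) (use assms in auto)
  finally show ?thesis by simp
qed

lemma uf_nonneg: "a > 0 \<Longrightarrow> \<rho> > 0 \<Longrightarrow> K > 0 \<Longrightarrow> uf a \<rho> K j \<ge> 0"
  by (simp add: uf_def pochhammer_pos less_imp_le)

lemma uf_mono: "a > 0 \<Longrightarrow> \<rho> > 0 \<Longrightarrow> 0 < K \<Longrightarrow> K \<le> L \<Longrightarrow> uf a \<rho> K j \<le> uf a \<rho> L j"
  unfolding uf_def
  by (intro divide_right_mono mult_left_mono poch_ratio_mono[of K L "\<rho>+a"])
     (auto simp: pochhammer_pos less_imp_le)

lemma uf_le: "a > 0 \<Longrightarrow> \<rho> > 0 \<Longrightarrow> 0 < K \<Longrightarrow> uf a \<rho> K j \<le> pochhammer a j / fact j"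
  unfolding uf_def
  using mult_left_mono[OF poch_ratio_le1[of K "\<rho>+a" j], of "pochhammer a j"]
  by (intro divide_right_mono) (auto simp: pochhammer_pos less_imp_le add.assoc)

lemma GWD_tendsto:
  assumes "a > 0" "\<rho> > 0" "m > 0" "K \<longlonglongrightarrow> m"
  shows "(\<lambda>i. GWD a (K i) \<rho> j) \<longlonglongrightarrow> GWD a m \<rho> j"
  unfolding GWD_def rfac_def
  using assms
  by (intro tendsto_intros) (auto simp: pos_nonpos)

lemma Cf_tendsto:
  assumes "a > 0" "\<rho> > 0" "m > 0" "K \<longlonglongrightarrow> m"
  shows "(\<lambda>i. Cf a \<rho> (K i)) \<longlonglongrightarrow> Cf a \<rho> m"
  unfolding Cf_def rfac_def
  using assms
  by (intro tendsto_intros) (auto simp: pos_nonpos)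

lemma Gamma_ratio_bound:
  assumes "x > 1" "(a::real) > 0"
  shows "Gamma x / Gamma (x+a) \<le> (x-1) powr (-a)"
proof -
  let ?f = "ln \<circ> Gamma :: real \<Rightarrow> real"
  have cv: "convex_on {0<..} ?f" by (rule log_convex_Gamma_real)
  have s1: "(?f (x-1) - ?f x) / ((x-1) - x) \<le> (?f (x-1) - ?f (x+a)) / ((x-1) - (x+a))"
    by (rule convex_on_slope_le(1)[OF cv]) (use assms in auto)
  have s2: "(?f (x-1) - ?f (x+a)) / ((x-1) - (x+a)) \<le> (?f x - ?f (x+a)) / (x - (x+a))"
    by (rule convex_on_slope_le(2)[OF cv]) (use assms in auto)
  have g: "Gamma x = (x-1) * Gamma (x-1)"
    using Gamma_plus1[of "x-1"] assms by (simp add: pos_nonpos)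
  have lg: "ln (Gamma x) = ln (x-1) + ln (Gamma (x-1))"
    using g assms Gamma_real_pos[of "x-1"] by (simp add: ln_mult)
  define u where "u = ln (Gamma (x-1))"
  define v where "v = ln (Gamma x)"
  define w where "w = ln (Gamma (x+a))"
  have e1: "(x-1)-x = -1" and e2: "x - (x+a) = -a" by simp_all
  have "(u - v) / (-1) \<le> (v - w) / (-a)"
    using order_trans[OF s1 s2] unfolding e1 e2 by (simp add: u_def v_def w_def)
  moreover have "(u - v) / (-1) = v - u" by simp
  moreover have "(v - w) / (-a) = (w - v) / a" by (metis divide_minus_left divide_minus_right minus_diff_eq)
  ultimately have "v - u \<le> (w - v) / a" by linarith
  hence "a * (v - u) \<le> a * ((w - v) / a)" using assms by (intro mult_left_mono) auto
  moreover have "a * ((w - v) / a) = w - v" using assms by simp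
  ultimately have "a * (v - u) \<le> w - v" by simp
  hence "a * ln (x-1) \<le> w - v" using lg by (simp add: u_def v_def)
  hence "v - w \<le> - a * ln (x-1)" by simp
  hence "exp (v - w) \<le> exp (- a * ln (x-1))" by simp
  moreover have "exp (v - w) = Gamma x / Gamma (x+a)"
    using assms by (simp add: exp_diff v_def w_def)
  moreover have "exp (- a * ln (x-1)) = (x-1) powr (-a)"
    using assms by (simp add: powr_def)
  ultimately show ?thesis by simp
qed

lemma Cf_bound:
  assumes "a > 0" "\<rho> > 0" "K \<ge> 0" "\<rho> + K > 1"
  shows "Cf a \<rho> K \<le> Gamma (\<rho>+a) / Gamma \<rho> * (\<rho> + K - 1) powr (-a)"
proof -
  have "Cf a \<rho> K = Gamma (\<rho>+a) / Gamma \<rho> * (Gamma (\<rho>+K) / Gamma (\<rho>+K+a))"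
    unfolding Cf_def rfac_def using assms by (simp add: field_simps add_ac)
  also have "\<dots> \<le> Gamma (\<rho>+a) / Gamma \<rho> * (\<rho> + K - 1) powr (-a)"
    using Gamma_ratio_bound[of "\<rho>+K" a] assms
    by (intro mult_left_mono) (auto simp: less_imp_le)
  finally show ?thesis .
qed

lemma MGWD_sum:
  fixes k :: "nat \<Rightarrow> real"
  assumes "a > 0" "\<rho> > 0" "\<And>i. k i > 0" "n \<ge> 1"
  shows "(\<Sum>x\<in>comp n t. MGWD a k \<rho> n x) = GWD a (\<Sum>i<n. k i) \<rho> t"
proof -
  define K where "K = (\<Sum>i<n. k i)"
  have Kp: "K > 0" unfolding K_def using assms by (intro sum_pos) (auto simp: lessThan_empty_iff)
  define c where "c = rfac \<rho> K * pochhammer a t / (rfac (\<rho>+a) K * pochhammer (\<rho>+a+K) t)"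
  have "(\<Sum>x\<in>comp n t. MGWD a k \<rho> n x) = (\<Sum>x\<in>comp n t. c * (\<Prod>i<n. pochhammer (k i) (x i) / fact (x i)))"
  proof (rule sum.cong[OF refl])
    fix x assume x: "x \<in> comp n t"
    hence sx: "(\<Sum>i<n. x i) = t" by (simp add: comp_def)
    have p: "(\<Prod>i<n. rfac (k i) (real (x i)) / fact (x i)) = (\<Prod>i<n. pochhammer (k i) (x i) / fact (x i))"
      using assms by (intro prod.cong) (auto simp: rfac_nat)
    have r: "rfac (\<rho> + a) (K + real t) = rfac (\<rho>+a) K * pochhammer (\<rho>+a+K) t"
      using rfac_add[of "\<rho>+a" K t] assms Kp by simp
    show "MGWD a k \<rho> n x = c * (\<Prod>i<n. pochhammer (k i) (x i) / fact (x i))"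
      unfolding MGWD_def c_def p sx K_def[symmetric] r using assms by (simp add: rfac_nat)
  qed
  also have "\<dots> = c * (pochhammer K t / fact t)"
    by (simp add: comp_poch K_def flip: sum_distrib_left)
  also have "\<dots> = GWD a K \<rho> t"
    unfolding c_def GWD_def using assms Kp by (simp add: rfac_nat)
  finally show ?thesis by (simp add: K_def)
qed

theorem theorem1:
  fixes M :: "'w measure" and X :: "nat \<Rightarrow> 'w \<Rightarrow> nat"
    and a \<rho> :: real and k :: "nat \<Rightarrow> real"
  assumes "prob_space M"
    and "a > 0" and "\<rho> > 0" and "\<And>j. k j > 0"
    and "\<And>j. X j \<in> measurable M (count_space UNIV)"
    and "\<And>j n. measure M {\<omega> \<in> space M. X j \<omega> = n} = GWD a (k j) \<rho> n"
    and "\<And>s x. s \<ge> 1 \<Longrightarrow>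
           measure M {\<omega> \<in> space M. \<forall>i<s. X i \<omega> = x i} = MGWD a k \<rho> s x"
  defines "S \<equiv> (\<lambda>\<omega>. \<Sum>j. ennreal (real (X j \<omega>)))"
  shows "(summable k \<longrightarrow>
            (AE \<omega> in M. S \<omega> < \<infinity>) \<and>
            (\<forall>n. measure M {\<omega> \<in> space M. S \<omega> = ennreal (real n)} = GWD a (suminf k) \<rho> n))
       \<and> (\<not> summable k \<longrightarrow> (AE \<omega> in M. S \<omega> = \<infinity>))"
proof -
  interpret P: prob_space M by fact
  note Xm[measurable] = assms(5)
  have a0: "a > 0" and r0: "\<rho> > 0" and kp: "\<And>j. k j > 0" by fact+
  define T where "T n \<omega> = (\<Sum>i<n. X i \<omega>)" for n \<omega>
  define Kk where "Kk n = (\<Sum>i<n. k i)" for n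
  have Kpos: "Kk n > 0" if "n \<ge> 1" for n
    unfolding Kk_def using that kp by (intro sum_pos) (auto simp: lessThan_empty_iff)
  have Kmono: "Kk n \<le> Kk n'" if "n \<le> n'" for n n'
    unfolding Kk_def using that kp by (intro sum_mono2) (auto simp: less_imp_le)
  have Tmono: "T n \<omega> \<le> T n' \<omega>" if "n \<le> n'" for n n' \<omega>
    unfolding T_def using that by (intro sum_mono2) auto
  have Tm[measurable]: "T n \<in> measurable M (count_space UNIV)" for n
  proof (induction n)
    case 0 then show ?case by (simp add: T_def[abs_def])
  next
    case (Suc n)
    have "T (Suc n) = (\<lambda>\<omega>. T n \<omega> + X n \<omega>)" by (simp add: T_def[abs_def])
    thus ?case using Suc by simp
  qed
  have ET: "measure M {\<omega>\<in>space M. T n \<omega> = t} = GWD a (Kk n) \<rho> t" if n1: "n \<ge> 1" for n t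
  proof -
    have eq: "{\<omega>\<in>space M. T n \<omega> = t} = (\<Union>x\<in>comp n t. {\<omega>\<in>space M. \<forall>i<n. X i \<omega> = x i})"
    proof safe
      fix \<omega> assume \<omega>: "\<omega> \<in> space M" and t: "t = T n \<omega>"
      define x where "x = restrict (\<lambda>i. X i \<omega>) {..<n}"
      have "x \<in> comp n t"
      proof -
        have "\<forall>i<n. X i \<omega> \<le> T n \<omega>" unfolding T_def
          by (auto intro!: member_le_sum)
        moreover have "(\<Sum>i<n. x i) = T n \<omega>" unfolding x_def T_def by simp
        ultimately show ?thesis unfolding comp_def x_def t by (auto simp: PiE_iff)
      qed
      moreover have "\<forall>i<n. X i \<omega> = x i" by (simp add: x_def)
      ultimately show "\<omega> \<in> (\<Union>x\<in>comp n (T n \<omega>). {\<omega> \<in> space M. \<forall>i<n. X i \<omega> = x i})"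
        using \<omega> t by auto
    next
      fix x \<omega> assume "x \<in> comp n t" "\<omega> \<in> space M" "\<forall>i<n. X i \<omega> = x i"
      thus "T n \<omega> = t" by (simp add: T_def comp_def)
    qed
    have "measure M {\<omega>\<in>space M. T n \<omega> = t} = (\<Sum>x\<in>comp n t. measure M {\<omega>\<in>space M. \<forall>i<n. X i \<omega> = x i})"
      unfolding eq
    proof (rule P.finite_measure_finite_Union)
      show "finite (comp n t)" by (rule finite_comp)
      show "(\<lambda>x. {\<omega> \<in> space M. \<forall>i<n. X i \<omega> = x i}) ` comp n t \<subseteq> P.events" by auto
      show "disjoint_family_on (\<lambda>x. {\<omega> \<in> space M. \<forall>i<n. X i \<omega> = x i}) (comp n t)"
      unfolding disjoint_family_on_def
      proof (intro ballI impI)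
        fix x y assume x: "x \<in> comp n t" and y: "y \<in> comp n t" and xy: "x \<noteq> y"
        have "\<exists>i<n. x i \<noteq> y i"
        proof (rule ccontr)
          assume "\<not> ?thesis"
          hence "\<forall>i<n. x i = y i" by auto
          moreover have "x \<in> extensional {..<n}" "y \<in> extensional {..<n}"
            using x y by (auto simp: comp_def PiE_def)
          ultimately have "x = y" by (intro extensionalityI) auto
          with xy show False by simp
        qed
        thus "{\<omega> \<in> space M. \<forall>i<n. X i \<omega> = x i} \<inter> {\<omega> \<in> space M. \<forall>i<n. X i \<omega> = y i} = {}"
          by auto
      qed
    qed
    also have "\<dots> = (\<Sum>x\<in>comp n t. MGWD a k \<rho> n x)"
      using assms(7)[OF n1] by simp
    also have "\<dots> = GWD a (Kk n) \<rho> t"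
      using MGWD_sum[OF a0 r0 kp n1] by (simp add: Kk_def)
    finally show ?thesis .
  qed
  have sum1: "(\<lambda>t. GWD a (Kk n) \<rho> t) sums 1" if n1: "n \<ge> 1" for n
  proof -
    have "(\<lambda>t. measure M {\<omega>\<in>space M. T n \<omega> = t}) sums measure M (\<Union>t. {\<omega>\<in>space M. T n \<omega> = t})"
      by (rule P.finite_measure_UNION) (auto simp: disjoint_family_on_def)
    moreover have "(\<Union>t. {\<omega>\<in>space M. T n \<omega> = t}) = space M" by auto
    ultimately show ?thesis using ET[OF n1] P.prob_space by simp
  qed
  have BT: "measure M {\<omega>\<in>space M. T n \<omega> < t} = (\<Sum>j<t. GWD a (Kk n) \<rho> j)" if n1: "n \<ge> 1" for n t
  proof -
    have "{\<omega>\<in>space M. T n \<omega> < t} = (\<Union>j\<in>{..<t}. {\<omega>\<in>space M. T n \<omega> = j})" by auto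
    hence "measure M {\<omega>\<in>space M. T n \<omega> < t} = (\<Sum>j<t. measure M {\<omega>\<in>space M. T n \<omega> = j})"
      by (simp only:) (rule P.finite_measure_finite_Union, auto simp: disjoint_family_on_def)
    thus ?thesis using ET[OF n1] by simp
  qed
  define Al where "Al t = {\<omega>\<in>space M. \<forall>n. T n \<omega> < t}" for t
  have Al_sets[measurable]: "Al t \<in> sets M" for t
    unfolding Al_def by measurable
  have Al_mono: "Al t \<subseteq> Al t'" if "t \<le> t'" for t t'
    using that unfolding Al_def by (auto intro: less_le_trans)
  have Al_lim: "(\<lambda>n. \<Sum>j<t. GWD a (Kk (Suc n)) \<rho> j) \<longlonglongrightarrow> measure M (Al t)" for t
  proof -
    have "(\<lambda>n. measure M {\<omega>\<in>space M. T (Suc n) \<omega> < t}) \<longlonglongrightarrow> measure M (\<Inter>n. {\<omega>\<in>space M. T (Suc n) \<omega> < t})"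
    proof (rule P.finite_Lim_measure_decseq)
      show "range (\<lambda>n. {\<omega> \<in> space M. T (Suc n) \<omega> < t}) \<subseteq> P.events" by auto
      show "decseq (\<lambda>n. {\<omega> \<in> space M. T (Suc n) \<omega> < t})"
        unfolding decseq_def
      proof (intro allI impI subsetI)
        fix m n \<omega> assume "m \<le> n" "\<omega> \<in> {\<omega> \<in> space M. T (Suc n) \<omega> < t}"
        thus "\<omega> \<in> {\<omega> \<in> space M. T (Suc m) \<omega> < t}" using Tmono[of "Suc m" "Suc n" \<omega>] by auto
      qed
    qed
    moreover have "(\<Inter>n. {\<omega>\<in>space M. T (Suc n) \<omega> < t}) = Al t"
    proof safe
      fix \<omega> assume "\<omega> \<in> (\<Inter>n. {\<omega>\<in>space M. T (Suc n) \<omega> < t})"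
      hence \<omega>: "\<omega> \<in> space M" "\<forall>n. T (Suc n) \<omega> < t" by auto
      have "T n \<omega> < t" for n using \<omega>(2) Tmono[of n "Suc n" \<omega>] by (auto intro: le_less_trans)
      thus "\<omega> \<in> Al t" using \<omega> by (simp add: Al_def)
    qed (auto simp: Al_def)
    ultimately show ?thesis using BT by simp
  qed
  have Ssup: "S \<omega> = (SUP n. of_nat (T n \<omega>))" for \<omega>
    unfolding S_def suminf_eq_SUP T_def by (simp add: ennreal_of_nat_eq_real_of_nat[symmetric])
  have Sle: "S \<omega> \<le> of_nat t \<longleftrightarrow> (\<forall>n. T n \<omega> \<le> t)" for \<omega> t
    by (simp add: Ssup SUP_le_iff)
  have Seq: "S \<omega> = of_nat t \<longleftrightarrow> \<omega> \<in> Al (Suc t) - Al t" if \<omega>: "\<omega> \<in> space M" for \<omega> t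
  proof
    assume St: "S \<omega> = of_nat t"
    hence "\<forall>n. T n \<omega> \<le> t" using Sle[of \<omega> t] by simp
    hence "\<omega> \<in> Al (Suc t)" using \<omega> by (simp add: Al_def less_Suc_eq_le)
    moreover have "\<omega> \<notin> Al t"
    proof
      assume "\<omega> \<in> Al t"
      hence lt: "\<forall>n. T n \<omega> < t" by (simp add: Al_def)
      hence "t > 0" by (metis gr_zeroI less_zeroE)
      have "\<forall>n. T n \<omega> \<le> t - 1" using lt by (simp add: le_diff_conv2 Suc_le_eq \<open>t > 0\<close>)
      hence "S \<omega> \<le> of_nat (t - 1)" using Sle by blast
      with St \<open>t > 0\<close> show False by simp
    qed
    ultimately show "\<omega> \<in> Al (Suc t) - Al t" by simp
  next
    assume "\<omega> \<in> Al (Suc t) - Al t"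
    hence le: "\<forall>n. T n \<omega> \<le> t" and "\<exists>n. T n \<omega> \<ge> t" using \<omega> by (auto simp: Al_def less_Suc_eq_le not_less)
    then obtain n where n: "T n \<omega> \<ge> t" by blast
    have "of_nat t \<le> (of_nat (T n \<omega>) :: ennreal)" using n by simp
    also have "\<dots> \<le> S \<omega>" unfolding Ssup by (rule SUP_upper) simp
    finally show "S \<omega> = of_nat t" using le Sle[of \<omega> t] by (simp add: antisym)
  qed
  have Sfin: "S \<omega> < \<infinity> \<longleftrightarrow> (\<exists>t. \<omega> \<in> Al t)" if \<omega>: "\<omega> \<in> space M" for \<omega>
  proof
    assume "S \<omega> < \<infinity>"
    then obtain t where "S \<omega> < of_nat t" using ennreal_Ex_less_of_nat by auto
    hence "S \<omega> \<le> of_nat t" by simp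
    hence "\<forall>n. T n \<omega> \<le> t" using Sle by blast
    hence "\<omega> \<in> Al (Suc t)" using \<omega> by (auto simp: Al_def less_Suc_eq_le)
    thus "\<exists>t. \<omega> \<in> Al t" by blast
  next
    assume "\<exists>t. \<omega> \<in> Al t"
    then obtain t where "\<forall>n. T n \<omega> < t" by (auto simp: Al_def)
    hence "S \<omega> \<le> of_nat t" using Sle by (simp add: less_imp_le)
    also have "\<dots> < \<infinity>" using of_nat_less_top by simp
    finally show "S \<omega> < \<infinity>" .
  qed
  have gpos: "GWD a K \<rho> j \<ge> 0" if "K > 0" for K j
    using GWD_split[OF a0 r0 that] Cf_pos[OF a0 r0, of K] uf_nonneg[OF a0 r0 that, of j] that by simp
  have part1: "summable k \<longrightarrow>
            (AE \<omega> in M. S \<omega> < \<infinity>) \<and>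
            (\<forall>n. measure M {\<omega> \<in> space M. S \<omega> = ennreal (real n)} = GWD a (suminf k) \<rho> n)"
  proof
    assume sk: "summable k"
    define m where "m = suminf k"
    have mpos: "m > 0" unfolding m_def using sk kp by (intro suminf_pos) auto
    have Kle: "Kk n \<le> m" for n unfolding Kk_def m_def using sk kp by (intro sum_le_suminf) (auto simp: less_imp_le)
    have Klim: "(\<lambda>n. Kk (Suc n)) \<longlonglongrightarrow> m"
      unfolding Kk_def m_def using summable_LIMSEQ[OF sk] by (rule LIMSEQ_Suc)
    have glim: "(\<lambda>n. GWD a (Kk (Suc n)) \<rho> j) \<longlonglongrightarrow> GWD a m \<rho> j" for j
      by (rule GWD_tendsto[OF a0 r0 mpos Klim])
    have Alm: "measure M (Al t) = (\<Sum>j<t. GWD a m \<rho> j)" for t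
      using LIMSEQ_unique[OF Al_lim tendsto_sum[OF glim]] by simp
    have Sdist: "measure M {\<omega> \<in> space M. S \<omega> = ennreal (real n)} = GWD a m \<rho> n" for n
    proof -
      have "{\<omega> \<in> space M. S \<omega> = ennreal (real n)} = Al (Suc n) - Al n"
        using Seq[of _ n] by (auto simp: ennreal_of_nat_eq_real_of_nat[symmetric] Al_def)
      hence "measure M {\<omega> \<in> space M. S \<omega> = ennreal (real n)} = measure M (Al (Suc n)) - measure M (Al n)"
        using Al_mono[of n "Suc n"] by (simp add: P.finite_measure_Diff)
      thus ?thesis by (simp add: Alm)
    qed
    have gsm: "summable (\<lambda>j. GWD a m \<rho> j)"
    proof (rule bounded_imp_summable)
      show "0 \<le> GWD a m \<rho> j" for j using gpos[OF mpos] .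
      show "(\<Sum>j\<le>n. GWD a m \<rho> j) \<le> 1" for n
        using Alm[of "Suc n"] P.prob_le_1[of "Al (Suc n)"] by (simp add: lessThan_Suc_atMost)
    qed
    have Cfm: "Cf a \<rho> m > 0" using Cf_pos[OF a0 r0] mpos by simp
    have "Bseq (\<lambda>n. Cf a \<rho> (Kk (Suc n)))"
      using Cf_tendsto[OF a0 r0 mpos Klim] by (intro convergent_imp_Bseq convergentI)
    then obtain Bc where Bc: "\<And>n. norm (Cf a \<rho> (Kk (Suc n))) \<le> Bc" unfolding Bseq_def by blast
    have bnd: "norm (GWD a (Kk (Suc n)) \<rho> j) \<le> Bc / Cf a \<rho> m * GWD a m \<rho> j" for n j
    proof -
      have Kp: "Kk (Suc n) > 0" using Kpos by simp
      have "norm (GWD a (Kk (Suc n)) \<rho> j) = Cf a \<rho> (Kk (Suc n)) * uf a \<rho> (Kk (Suc n)) j"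
        using GWD_split[OF a0 r0 Kp] Cf_pos[OF a0 r0, of "Kk (Suc n)"] uf_nonneg[OF a0 r0 Kp, of j] Kp by simp
      also have "\<dots> \<le> Bc * uf a \<rho> m j"
        using Bc[of n] uf_mono[OF a0 r0 Kp Kle[of "Suc n"], of j] uf_nonneg[OF a0 r0 Kp, of j]
          Cf_pos[OF a0 r0, of "Kk (Suc n)"] Kp
        by (intro mult_mono) auto
      also have "\<dots> = Bc / Cf a \<rho> m * GWD a m \<rho> j"
        using GWD_split[OF a0 r0 mpos] Cfm by simp
      finally show ?thesis .
    qed
    have "(\<lambda>n. \<Sum>j. GWD a (Kk (Suc n)) \<rho> j) \<longlonglongrightarrow> (\<Sum>j. GWD a m \<rho> j)"
      using tannerys_theorem[where a = "\<lambda>j n. GWD a (Kk (Suc n)) \<rho> j" and b = "\<lambda>j. GWD a m \<rho> j"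
          and M = "\<lambda>j. Bc / Cf a \<rho> m * GWD a m \<rho> j" and F = sequentially, OF glim]
        bnd gsm by (auto intro: summable_mult always_eventually)
    moreover have "(\<lambda>n. \<Sum>j. GWD a (Kk (Suc n)) \<rho> j) = (\<lambda>n. 1)"
      using sum1 by (auto simp: sums_iff)
    ultimately have "(\<Sum>j. GWD a m \<rho> j) = 1" using LIMSEQ_unique[OF tendsto_const] by metis
    hence gs1: "(\<lambda>j. GWD a m \<rho> j) sums 1" using gsm by (simp add: sums_iff)
    have "(\<lambda>t. measure M (Al t)) \<longlonglongrightarrow> measure M (\<Union>t. Al t)"
      by (rule P.finite_Lim_measure_incseq) (auto simp: incseq_def Al_mono)
    moreover have "(\<lambda>t. measure M (Al t)) \<longlonglongrightarrow> 1"
      using gs1 unfolding sums_def Alm .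
    ultimately have U1: "measure M (\<Union>t. Al t) = 1" using LIMSEQ_unique by blast
    have "space M - (\<Union>t. Al t) \<in> null_sets M"
      using U1 P.prob_compl[of "\<Union>t. Al t"] by (auto simp: null_sets_def P.emeasure_eq_measure)
    moreover have "{\<omega> \<in> space M. \<not> S \<omega> < \<infinity>} \<subseteq> space M - (\<Union>t. Al t)"
      using Sfin by auto
    ultimately have "AE \<omega> in M. S \<omega> < \<infinity>" by (rule AE_I')
    thus "(AE \<omega> in M. S \<omega> < \<infinity>) \<and> (\<forall>n. measure M {\<omega> \<in> space M. S \<omega> = ennreal (real n)} = GWD a (suminf k) \<rho> n)"
      using Sdist by (simp add: m_def)
  qed
  have part2: "\<not> summable k \<longrightarrow> (AE \<omega> in M. S \<omega> = \<infinity>)"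
  proof
    assume nsk: "\<not> summable k"
    have unb: "\<exists>n. Kk n > B" for B
    proof (rule ccontr)
      assume "\<not> ?thesis"
      hence "\<forall>n. Kk n \<le> B" by (simp add: not_less)
      moreover have "(\<Sum>j\<le>n. k j) = Kk (Suc n)" for n by (simp add: Kk_def lessThan_Suc_atMost)
      ultimately have "summable k"
        using kp by (intro bounded_imp_summable[of k B]) (auto simp: less_imp_le)
      with nsk show False by simp
    qed
    have flim: "filterlim (\<lambda>n. \<rho> + Kk (Suc n) - 1) at_top sequentially"
      unfolding filterlim_at_top eventually_sequentially
    proof
      fix Z
      obtain N where N: "Kk N > Z + 1 - \<rho>" using unb by blast
      have "\<forall>n\<ge>N. Z \<le> \<rho> + Kk (Suc n) - 1"
      proof safe
        fix n assume "N \<le> n"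
        hence "Kk N \<le> Kk (Suc n)" by (intro Kmono) simp
        thus "Z \<le> \<rho> + Kk (Suc n) - 1" using N by linarith
      qed
      thus "\<exists>N. \<forall>n\<ge>N. Z \<le> \<rho> + Kk (Suc n) - 1" by blast
    qed
    define G where "G = Gamma (\<rho>+a) / Gamma \<rho>"
    have Al0: "measure M (Al t) = 0" for t
    proof -
      define D where "D = (\<Sum>j<t. pochhammer a j / fact j)"
      have D0: "D \<ge> 0" unfolding D_def using a0 by (intro sum_nonneg) (auto simp: pochhammer_pos less_imp_le)
      have "(\<lambda>n. (\<rho> + Kk (Suc n) - 1) powr (-a)) \<longlonglongrightarrow> 0"
        by (rule tendsto_neg_powr[OF _ flim]) (use a0 in simp)
      hence lim0: "(\<lambda>n. G * D * (\<rho> + Kk (Suc n) - 1) powr (-a)) \<longlonglongrightarrow> 0"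
        using tendsto_mult[OF tendsto_const[of "G * D"]] by fastforce
      have ev: "\<forall>\<^sub>F n in sequentially. 1 \<le> \<rho> + Kk (Suc n) - 1"
        using flim unfolding filterlim_at_top by blast
      have "measure M (Al t) \<le> 0"
      proof (rule LIMSEQ_le_const[OF lim0])
        from ev obtain N where N: "\<And>n. n \<ge> N \<Longrightarrow> 1 \<le> \<rho> + Kk (Suc n) - 1"
          unfolding eventually_sequentially by blast
        have "measure M (Al t) \<le> G * D * (\<rho> + Kk (Suc n) - 1) powr (-a)" if n: "n \<ge> N" for n
        proof -
          define K where "K = Kk (Suc n)"
          have Kp: "K > 0" unfolding K_def using Kpos by simp
          have "measure M (Al t) \<le> measure M {\<omega>\<in>space M. T (Suc n) \<omega> < t}"
            by (rule P.finite_measure_mono) (auto simp: Al_def)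
          also have "\<dots> = (\<Sum>j<t. Cf a \<rho> K * uf a \<rho> K j)"
            using BT[of "Suc n" t] GWD_split[OF a0 r0 Kp] by (simp add: K_def)
          also have "\<dots> \<le> (\<Sum>j<t. Cf a \<rho> K * (pochhammer a j / fact j))"
            using Cf_pos[OF a0 r0, of K] Kp uf_le[OF a0 r0 Kp]
            by (intro sum_mono mult_left_mono) auto
          also have "\<dots> = Cf a \<rho> K * D" by (simp add: D_def sum_distrib_left)
          also have "\<dots> \<le> G * (\<rho> + K - 1) powr (-a) * D"
            using Cf_bound[OF a0 r0, of K] Kp N[OF n] D0 by (intro mult_right_mono) (auto simp: G_def K_def)
          finally show ?thesis by (simp add: K_def mult_ac)
        qed
        thus "\<exists>N. \<forall>n\<ge>N. measure M (Al t) \<le> G * D * (\<rho> + Kk (Suc n) - 1) powr - a" by blast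
      qed
      thus ?thesis using measure_nonneg[of M "Al t"] by linarith
    qed
    have "(\<Union>t. Al t) \<in> null_sets M"
      by (rule null_sets_UN) (simp add: null_sets_def P.emeasure_eq_measure Al0)
    moreover have "{\<omega> \<in> space M. \<not> S \<omega> = \<infinity>} \<subseteq> (\<Union>t. Al t)"
      using Sfin by (auto simp: top.not_eq_extremum)
    ultimately show "AE \<omega> in M. S \<omega> = \<infinity>" by (rule AE_I')
  qed
  show ?thesis using part1 part2 by blast
qed

end
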